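(* For all $m,n,p\in\frac1T\mathbb N$ and $a\in V$, $\mathbf 1*^T_{n,p,m}a=\delta_{n,p}\,a$.
   Context: Throughout, $T$ is a positive integer and $V$ is a vertex algebra (vertex operator $Y(a,x)=\sum_{i\in\mathbb Z}a_ix^{-i-1}$, vacuum $\mathbf 1$) with a grading $V=\bigoplus_{i\ge\Delta}V_i$, $\Delta\in\mathbb Z_{\le0}$, such that $\mathbf 1\in V_0$ and $a_iV_j\subset V_{\mathrm{wt}a-1-i+j}$ for homogeneous $a$ ($\mathrm{wt}\,a=k$ for $a\in V_k$; $V_k=0$ for $k<\Delta$). $\mathbb N=\{0,1,2,\dots\}$. For rationals $i,j$, $\delta(i\le j)$ is $1$ if $i\le j$ and $0$ otherwise. For $i,j\in\frac1T\mathbb Z$, $\langle i-j\rangle$ is the unique integer $r$ with $0\le r\le T-1$ and $i-j-r/T\in\mathbb Z$. $\mathrm{Res}_x$ is the coefficient of $x^{-1}$; $(1+x)^c$ ($c\in\mathbb Q$) is $\sum_{k\ge0}\binom ckx^k$. For $f(z)=\sum_j\lambda_jz^j\in\mathbb C[z,z^{-1}]$ and $a,b\in V$, $f(z)|_{z^j=a_jb}=\sum_j\lambda_ja_jb$. Polynomial subspaces: for $N,q\in\mathbb Z$, $Q\in\mathbb Q$, $O(N,Q,q;z)\subset\mathbb C[z,z^{-1}]$ is spanned by $z^i$ ($i\ge N+1$) and $\sum_{i=0}^{N-q-j}\binom Qiz^{i+q+j}$ ($j=0,-1,-2,\dots$). For $m=l_1+i_1/T$, $n=l_3+i_3/T\in\frac1T\mathbb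 N$ ($l_1,l_3\in\mathbb N$, $0\le i_1,i_3\le T-1$), $\alpha,\beta\in\mathbb Z$, $s\in\{0,\dots,T-1\}$: $\mathcal O^{T,s}_{n,m}(\alpha,\beta;z)=O(\alpha+\beta-1-\Delta,\ \alpha-1+l_1+\delta(s\le i_1)+s/T,\ -l_1-l_3-\delta(s\le i_1)-\delta(T\le s+i_3)-1;z)$, and $\mathcal O^T_{n,m}(\alpha,\beta;z)=\bigcap_s\mathcal O^{T,s}_{n,m}(\alpha,\beta;z)$. Idempotent polynomials: put $N=\alpha+\beta-1-\Delta$ and $D=N+l_1+l_3+3$. For $r\in\{0,\dots,T-1\}$ and $i\in\mathbb Z$, $e^{T,r}_{n,m}(\alpha,\beta,i;z)=0$ if $i\ge N+1$ or $D\le0$; otherwise it is the unique Laurent polynomial in $\mathrm{span}\{z^k:N+1-TD\le k\le N\}$ with $e^{T,r}_{n,m}(\alpha,\beta,i;z)\equiv\delta_{r,s}z^i$ modulo $O(N,\alpha-1+l_1+\delta(s\le i_1)+s/T,-l_1-l_3-3;z)$ for every $s\in\{0,\dots,T-1\}$. Product: for $p=l_2+i_2/T\in\frac1T\mathbb N$ ($l_2\in\mathbb N$, $0\le i_2\le T-1$), let $r=\langle p-n\rangle$, $\mu=l_2-l_1-l_3-\delta(r\le i_1)-\delta(T\le r+i_3)$, and $P^T_{n,p,m}(\alpha,\beta;z)=\sum_{i=0}^{l_2}\binom{\mu}{i}\mathrm{Res}_x\Big((1+x)^{\alpha-1+l_1+\delta(r\le i_1)+r/T}x^{\mu-i}\sum_{j\in\mathbb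 Z}e^{T,r}_{n,m}(\alpha,\beta,j;z)x^{-j-1}\Big)$. For homogeneous $a,b\in V$, $a*^T_{n,p,m}b=P^T_{n,p,m}(\mathrm{wt}\,a,\mathrm{wt}\,b;z)|_{z^j=a_jb}$, extended bilinearly to all of $V$. *)

theory Defs
  imports Complex_Main
begin

text \<open>Y a i b is the i-th mode a_i b. Axioms: bilinearity, truncation, vacuum
  axioms and the Borcherds (Jacobi) identity; the infinite sums there are
  finite by truncation and are written as partial sums that stabilise.\<close>

definition vertex_algebra ::
  "(complex \<Rightarrow> 'v::ab_group_add \<Rightarrow> 'v) \<Rightarrow> ('v \<Rightarrow> int \<Rightarrow> 'v \<Rightarrow> 'v) \<Rightarrow> 'v \<Rightarrow> bool" where
  "vertex_algebra sc Y vac \<longleftrightarrow>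
     vector_space sc \<and>
     (\<forall>a i. Vector_Spaces.linear sc sc (Y a i)) \<and>
     (\<forall>b i. Vector_Spaces.linear sc sc (\<lambda>a. Y a i b)) \<and>
     (\<forall>a b. \<exists>K. \<forall>i\<ge>K. Y a i b = 0) \<and>
     (\<forall>a i. Y vac i a = (if i = -1 then a else 0)) \<and>
     (\<forall>a. Y a (-1) vac = a) \<and>
     (\<forall>a i. i \<ge> 0 \<longrightarrow> Y a i vac = 0) \<and>
     (\<forall>a b c l m n. \<exists>K0. \<forall>K\<ge>K0.
        (\<Sum>i\<le>K. sc (of_int m gchoose i) (Y (Y a (l + int i) b) (m + n - int i) c)) =
        (\<Sum>i\<le>K. sc ((-1) ^ i * (of_int l gchoose i))
            (Y a (l + m - int i) (Y b (n + int i) c)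
             - sc (if even l then 1 else -1) (Y b (l + n - int i) (Y a (m + int i) c)))))"

definition graded_vertex_algebra ::
  "(complex \<Rightarrow> 'v::ab_group_add \<Rightarrow> 'v) \<Rightarrow> ('v \<Rightarrow> int \<Rightarrow> 'v \<Rightarrow> 'v) \<Rightarrow> 'v
    \<Rightarrow> (int \<Rightarrow> 'v set) \<Rightarrow> int \<Rightarrow> bool" where
  "graded_vertex_algebra sc Y vac Vg \<Delta> \<longleftrightarrow>
     vertex_algebra sc Y vac \<and> \<Delta> \<le> 0 \<and>
     (\<forall>k. module.subspace sc (Vg k)) \<and>
     (\<forall>k. k < \<Delta> \<longrightarrow> Vg k = {0}) \<and>
     (\<forall>v. \<exists>!c. finite {k. c k \<noteq> 0} \<and> (\<forall>k. c k \<in> Vg k) \<and> v = sum c {k. c k \<noteq> 0}) \<and>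
     vac \<in> Vg 0 \<and>
     (\<forall>k j a b i. a \<in> Vg k \<longrightarrow> b \<in> Vg j \<longrightarrow> Y a i b \<in> Vg (k - 1 - i + j))"

definition comp :: "(int \<Rightarrow> 'v::ab_group_add set) \<Rightarrow> 'v \<Rightarrow> int \<Rightarrow> 'v" where
  "comp Vg v = (THE c. finite {k. c k \<noteq> 0} \<and> (\<forall>k. c k \<in> Vg k) \<and> v = sum c {k. c k \<noteq> 0})"

section \<open>Laurent polynomials in z, as finitely supported coefficient functions\<close>

type_synonym lpoly = "int \<Rightarrow> complex"

definition zmon :: "int \<Rightarrow> lpoly" where
  "zmon i = (\<lambda>k. if k = i then 1 else 0)"

definition lspan :: "lpoly set \<Rightarrow> lpoly set" where
  "lspan G = {f. \<exists>S c. finite S \<and> S \<subseteq> G \<and> f = (\<lambda>k. \<Sum>g\<in>S. c g * g k)}"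

definition binom_gen :: "int \<Rightarrow> rat \<Rightarrow> int \<Rightarrow> int \<Rightarrow> lpoly" where
  "binom_gen N Q q j = (\<lambda>k. if q + j \<le> k \<and> k \<le> N then (of_rat Q gchoose nat (k - q - j)) else 0)"

definition Ospace :: "int \<Rightarrow> rat \<Rightarrow> int \<Rightarrow> lpoly set" where
  "Ospace N Q q = lspan ({zmon i | i. i \<ge> N + 1} \<union> {binom_gen N Q q j | j. j \<le> 0})"

definition dlt :: "bool \<Rightarrow> int" where
  "dlt b = (if b then 1 else 0)"

text \<open>For x = l + i/T with 0 \<le> i \<le> T-1: lpart x = l, ipart T x = i.\<close>
definition lpart :: "rat \<Rightarrow> int" where
  "lpart x = \<lfloor>x\<rfloor>"

definition ipart :: "nat \<Rightarrow> rat \<Rightarrow> int" where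
  "ipart T x = \<lfloor>of_nat T * (x - of_int \<lfloor>x\<rfloor>)\<rfloor>"

definition bracket :: "nat \<Rightarrow> rat \<Rightarrow> rat \<Rightarrow> int" where
  "bracket T i j = (THE r. 0 \<le> r \<and> r \<le> int T - 1 \<and> i - j - of_int r / of_nat T \<in> \<int>)"

definition idem :: "nat \<Rightarrow> rat \<Rightarrow> rat \<Rightarrow> int \<Rightarrow> int \<Rightarrow> int \<Rightarrow> int \<Rightarrow> int \<Rightarrow> lpoly" where
  "idem T n m \<Delta> \<alpha> \<beta> r i =
    (let l1 = lpart m; i1 = ipart T m; l3 = lpart n;
         N = \<alpha> + \<beta> - 1 - \<Delta>; D = N + l1 + l3 + 3 in
     if i \<ge> N + 1 \<or> D \<le> 0 then (\<lambda>k. 0) else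
     (THE f. (\<forall>k. f k \<noteq> 0 \<longrightarrow> N + 1 - int T * D \<le> k \<and> k \<le> N) \<and>
        (\<forall>s\<in>{0..int T - 1}.
           (\<lambda>k. f k - (if r = s then zmon i k else 0))
             \<in> Ospace N (of_int (\<alpha> - 1 + l1 + dlt (s \<le> i1)) + of_int s / of_nat T) (- l1 - l3 - 3))))"

text \<open>The residue
  Res_x((1+x)^c x^(mu-i) sum_j e_j x^(-j-1)) is written out: only j with
  mu - i \<le> j \<le> N contribute (e_j = 0 for j \<ge> N+1).\<close>
definition Ppoly :: "nat \<Rightarrow> rat \<Rightarrow> rat \<Rightarrow> rat \<Rightarrow> int \<Rightarrow> int \<Rightarrow> int \<Rightarrow> lpoly" where
  "Ppoly T n p m \<Delta> \<alpha> \<beta> =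
    (let l1 = lpart m; i1 = ipart T m; l3 = lpart n; i3 = ipart T n; l2 = lpart p;
         r = bracket T p n;
         \<mu> = l2 - l1 - l3 - dlt (r \<le> i1) - dlt (int T \<le> r + i3);
         c = of_int (\<alpha> - 1 + l1 + dlt (r \<le> i1)) + of_int r / (of_nat T :: rat);
         N = \<alpha> + \<beta> - 1 - \<Delta> in
     (\<lambda>k. \<Sum>i\<in>{0..nat l2}. (of_int \<mu> gchoose i) *
            (\<Sum>j\<in>{\<mu> - int i..N}. (of_rat c gchoose nat (j - \<mu> + int i)) * idem T n m \<Delta> \<alpha> \<beta> r j k)))"

definition star ::
  "(complex \<Rightarrow> 'v::ab_group_add \<Rightarrow> 'v) \<Rightarrow> ('v \<Rightarrow> int \<Rightarrow> 'v \<Rightarrow> 'v) \<Rightarrow> (int \<Rightarrow> 'v set) \<Rightarrow> int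
    \<Rightarrow> nat \<Rightarrow> rat \<Rightarrow> rat \<Rightarrow> rat \<Rightarrow> 'v \<Rightarrow> 'v \<Rightarrow> 'v" where
  "star sc Y Vg \<Delta> T n p m a b =
    (\<Sum>k1\<in>{k. comp Vg a k \<noteq> 0}. \<Sum>k2\<in>{k. comp Vg b k \<noteq> 0}.
       \<Sum>j\<in>{j. Ppoly T n p m \<Delta> k1 k2 j \<noteq> 0}.
         sc (Ppoly T n p m \<Delta> k1 k2 j) (Y (comp Vg a k1) j (comp Vg b k2)))"

end

theory Submission
  imports Defs "Jordan_Normal_Form.Determinant" "HOL-Computational_Algebra.Formal_Power_Series"
begin


definition Bz :: "complex \<Rightarrow> int \<Rightarrow> complex" where
  "Bz x k = (if 0 \<le> k then x gchoose nat k else 0)"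

definition phi :: "rat \<Rightarrow> int \<Rightarrow> int \<Rightarrow> lpoly \<Rightarrow> complex" where
  "phi Q q d g = (\<Sum>k\<in>{k. g k \<noteq> 0}. g k * Bz (- of_rat Q) (q + d - k))"

lemma phi_superset:
  assumes "finite S" "{k. g k \<noteq> 0} \<subseteq> S"
  shows "phi Q q d g = (\<Sum>k\<in>S. g k * Bz (- of_rat Q) (q + d - k))"
  unfolding phi_def by (rule sum.mono_neutral_left) (use assms in auto)

lemma phi_lin:
  assumes "finite {k. f k \<noteq> 0}" "finite {k. h k \<noteq> 0}"
  shows "phi Q q d (\<lambda>k. a * f k + b * h k) = a * phi Q q d f + b * phi Q q d h"
proof -
  let ?S = "{k. f k \<noteq> 0} \<union> {k. h k \<noteq> 0}"
  have fin: "finite ?S" using assms by auto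
  have "phi Q q d (\<lambda>k. a * f k + b * h k) = (\<Sum>k\<in>?S. (a * f k + b * h k) * Bz (- of_rat Q) (q + d - k))"
    by (rule phi_superset[OF fin]) auto
  also have "\<dots> = a * (\<Sum>k\<in>?S. f k * Bz (- of_rat Q) (q + d - k)) + b * (\<Sum>k\<in>?S. h k * Bz (- of_rat Q) (q + d - k))"
    by (simp add: sum.distrib sum_distrib_left algebra_simps)
  also have "\<dots> = a * phi Q q d f + b * phi Q q d h"
    by (subst (1 2) phi_superset[OF fin]) auto
  finally show ?thesis .
qed

lemma phi_diff:
  assumes "finite {k. f k \<noteq> 0}" "finite {k. h k \<noteq> 0}"
  shows "phi Q q d (\<lambda>k. f k - h k) = phi Q q d f - phi Q q d h"
  using phi_lin[OF assms, of Q q d 1 "-1"] by simp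

lemma lspan_gen: "h \<in> G \<Longrightarrow> h \<in> lspan G"
  unfolding lspan_def by (rule CollectI, rule exI[of _ "{h}"], rule exI[of _ "\<lambda>_. 1"]) auto

lemma lspan_zero: "(\<lambda>k. 0) \<in> lspan G"
  unfolding lspan_def by (rule CollectI, rule exI[of _ "{}"]) auto

lemma lspan_add:
  assumes "f \<in> lspan G" "g \<in> lspan G"
  shows "(\<lambda>k. f k + g k) \<in> lspan G"
proof -
  obtain S1 c1 where 1: "finite S1" "S1 \<subseteq> G" "f = (\<lambda>k. \<Sum>h\<in>S1. c1 h * h k)"
    using assms(1) unfolding lspan_def by auto
  obtain S2 c2 where 2: "finite S2" "S2 \<subseteq> G" "g = (\<lambda>k. \<Sum>h\<in>S2. c2 h * h k)"
    using assms(2) unfolding lspan_def by auto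
  define c where "c h = (if h \<in> S1 then c1 h else 0) + (if h \<in> S2 then c2 h else 0)" for h
  have "(\<lambda>k. f k + g k) = (\<lambda>k. \<Sum>h\<in>S1 \<union> S2. c h * h k)"
  proof
    fix k
    have a: "(\<Sum>h\<in>S1 \<union> S2. (if h \<in> S1 then c1 h else 0) * h k) = (\<Sum>h\<in>S1. c1 h * h k)"
      by (rule sum.mono_neutral_cong_right) (use 1 2 in auto)
    have b: "(\<Sum>h\<in>S1 \<union> S2. (if h \<in> S2 then c2 h else 0) * h k) = (\<Sum>h\<in>S2. c2 h * h k)"
      by (rule sum.mono_neutral_cong_right) (use 1 2 in auto)
    show "f k + g k = (\<Sum>h\<in>S1 \<union> S2. c h * h k)"
      unfolding c_def distrib_right sum.distrib a b using 1 2 by simp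
  qed
  then show ?thesis unfolding lspan_def
    by (intro CollectI exI[of _ "S1 \<union> S2"] exI[of _ c]) (use 1 2 in auto)
qed

lemma lspan_scale:
  assumes "f \<in> lspan G"
  shows "(\<lambda>k. a * f k) \<in> lspan G"
proof -
  obtain S c where 1: "finite S" "S \<subseteq> G" "f = (\<lambda>k. \<Sum>h\<in>S. c h * h k)"
    using assms unfolding lspan_def by auto
  have "(\<lambda>k. a * f k) = (\<lambda>k. \<Sum>h\<in>S. (a * c h) * h k)"
    using 1 by (simp add: sum_distrib_left mult.assoc)
  then show ?thesis unfolding lspan_def
    by (intro CollectI exI[of _ S] exI[of _ "\<lambda>h. a * c h"]) (use 1 in auto)
qed

lemma lspan_sum:
  assumes "finite A" "\<And>x. x \<in> A \<Longrightarrow> F x \<in> lspan G"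
  shows "(\<lambda>k. \<Sum>x\<in>A. F x k) \<in> lspan G"
  using assms
proof (induction A rule: finite_induct)
  case empty then show ?case using lspan_zero by simp
next
  case (insert x A)
  then show ?case using lspan_add[of "F x" G "\<lambda>k. \<Sum>x\<in>A. F x k"] by simp
qed

lemma lspan_eval:
  assumes "f \<in> lspan G" "\<And>h. h \<in> G \<Longrightarrow> h k0 = 0"
  shows "f k0 = 0"
proof -
  obtain S c where 1: "finite S" "S \<subseteq> G" "f = (\<lambda>k. \<Sum>h\<in>S. c h * h k)"
    using assms unfolding lspan_def by auto
  then show ?thesis using assms(2) by (auto intro!: sum.neutral)
qed

lemma lspan_phi:
  assumes "f \<in> lspan G" "\<And>h. h \<in> G \<Longrightarrow> finite {k. h k \<noteq> 0} \<and> phi Q q d h = 0"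
  shows "finite {k. f k \<noteq> 0} \<and> phi Q q d f = 0"
proof -
  obtain S c where 1: "finite S" "S \<subseteq> G" "f = (\<lambda>k. \<Sum>h\<in>S. c h * h k)"
    using assms unfolding lspan_def by auto
  define U where "U = (\<Union>h\<in>S. {k. h k \<noteq> 0})"
  have finU: "finite U" unfolding U_def using 1 assms(2) by auto
  have sub: "{k. f k \<noteq> 0} \<subseteq> U"
  proof
    fix k assume "k \<in> {k. f k \<noteq> 0}"
    then have "(\<Sum>h\<in>S. c h * h k) \<noteq> 0" using 1 by simp
    then obtain h where "h \<in> S" "c h * h k \<noteq> 0" using sum.neutral[of S "\<lambda>h. c h * h k"] by blast
    then show "k \<in> U" unfolding U_def by auto
  qed
  have "phi Q q d f = (\<Sum>k\<in>U. f k * Bz (- of_rat Q) (q + d - k))"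
    by (rule phi_superset[OF finU sub])
  also have "\<dots> = (\<Sum>h\<in>S. c h * (\<Sum>k\<in>U. h k * Bz (- of_rat Q) (q + d - k)))"
  proof -
    have "(\<Sum>k\<in>U. f k * Bz (- of_rat Q) (q + d - k)) = (\<Sum>k\<in>U. \<Sum>h\<in>S. c h * (h k * Bz (- of_rat Q) (q + d - k)))"
      unfolding 1(3) by (simp add: sum_distrib_right mult.assoc)
    also have "\<dots> = (\<Sum>h\<in>S. \<Sum>k\<in>U. c h * (h k * Bz (- of_rat Q) (q + d - k)))"
      by (rule sum.swap)
    finally show ?thesis by (simp add: sum_distrib_left)
  qed
  also have "\<dots> = (\<Sum>h\<in>S. c h * phi Q q d h)"
  proof (rule sum.cong[OF refl])
    fix h assume h: "h \<in> S"
    have "phi Q q d h = (\<Sum>k\<in>U. h k * Bz (- of_rat Q) (q + d - k))"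
      by (rule phi_superset[OF finU]) (use h in \<open>auto simp: U_def\<close>)
    then show "c h * (\<Sum>k\<in>U. h k * Bz (- of_rat Q) (q + d - k)) = c h * phi Q q d h" by simp
  qed
  also have "\<dots> = 0" using assms(2) 1 by (auto intro!: sum.neutral)
  finally show ?thesis using finite_subset[OF sub finU] by simp
qed

lemma sum_int_interval:
  assumes "a \<le> b"
  shows "(\<Sum>k\<in>{a..b::int}. F k) = (\<Sum>i\<in>{0..nat(b-a)}. F (a + int i))"
  by (rule sum.reindex_bij_witness[of _ "\<lambda>i. a + int i" "\<lambda>k. nat (k - a)"]) (use assms in auto)

lemma sum_int_window:
  "(\<Sum>k\<in>{N + 1 - int n..N}. F k) = (\<Sum>j<n. F (N - int j))"
  by (rule sum.reindex_bij_witness[of _ "\<lambda>j. N - int j" "\<lambda>k. nat (N - k)"]) auto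



lemma Bz_neg: "k < 0 \<Longrightarrow> Bz x k = 0" by (simp add: Bz_def)
lemma Bz_0: "Bz x 0 = 1" by (simp add: Bz_def)

lemma zero_gchoose_pos: assumes "0 < n" shows "(0::complex) gchoose n = 0"
proof -
  have "(0::nat) choose n = 0" using assms by (simp add: binomial_eq_0)
  then show ?thesis by (metis binomial_gbinomial of_nat_0)
qed

lemma phi_zmon: "phi Q q d (zmon i) = Bz (- of_rat Q) (q + d - i)"
  by (subst phi_superset[of "{i}"]) (auto simp: zmon_def)

lemma supp_zmon: "finite {k. zmon i k \<noteq> 0}"
  by (rule finite_subset[of _ "{i}"]) (auto simp: zmon_def)

lemma supp_bg: "{k. binom_gen N Q q j k \<noteq> 0} \<subseteq> {q + j..N}"
  by (auto simp: binom_gen_def split: if_splits)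

lemma phi_bg:
  assumes "j \<le> 0" "1 \<le> d" "q + d \<le> N"
  shows "phi Q q d (binom_gen N Q q j) = 0"
proof -
  define x where "x = (of_rat Q :: complex)"
  define M where "M = nat (N - q - j)"
  define n0 where "n0 = nat (d - j)"
  have n0M: "n0 \<le> M" "1 \<le> n0" using assms unfolding n0_def M_def by auto
  have "phi Q q d (binom_gen N Q q j) = (\<Sum>k\<in>{q + j..N}. binom_gen N Q q j k * Bz (- x) (q + d - k))"
    unfolding x_def by (rule phi_superset) (use supp_bg in auto)
  also have "\<dots> = (\<Sum>i\<in>{0..M}. binom_gen N Q q j (q + j + int i) * Bz (- x) (q + d - (q + j + int i)))"
    unfolding M_def by (subst sum_int_interval) (use assms in \<open>auto simp: algebra_simps\<close>)
  also have "\<dots> = (\<Sum>i\<in>{0..M}. (x gchoose i) * Bz (- x) (d - j - int i))"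
  proof (rule sum.cong[OF refl])
    fix i assume "i \<in> {0..M}"
    then have "int i \<le> N - q - j" unfolding M_def using assms by auto
    then show "binom_gen N Q q j (q + j + int i) * Bz (- x) (q + d - (q + j + int i)) =
        (x gchoose i) * Bz (- x) (d - j - int i)"
      by (auto simp: binom_gen_def x_def algebra_simps)
  qed
  also have "\<dots> = (\<Sum>i\<in>{0..n0}. (x gchoose i) * Bz (- x) (d - j - int i))"
    by (rule sum.mono_neutral_right) (use n0M assms in \<open>auto simp: n0_def Bz_def\<close>)
  also have "\<dots> = (\<Sum>i\<in>{0..n0}. (x gchoose i) * ((- x) gchoose (n0 - i)))"
  proof (rule sum.cong[OF refl])
    fix i assume "i \<in> {0..n0}"
    then have "int i \<le> d - j" "nat (d - j - int i) = n0 - i" using assms unfolding n0_def by auto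
    then show "(x gchoose i) * Bz (- x) (d - j - int i) = (x gchoose i) * ((- x) gchoose (n0 - i))"
      by (simp add: Bz_def)
  qed
  also have "\<dots> = (x + - x) gchoose n0" by (rule gbinomial_Vandermonde)
  also have "\<dots> = 0" using n0M zero_gchoose_pos by simp
  finally show ?thesis .
qed

lemma Ospace_fwd:
  assumes "g \<in> Ospace N Q q" "1 \<le> d" "q + d \<le> N"
  shows "finite {k. g k \<noteq> 0} \<and> phi Q q d g = 0"
  using assms(1) unfolding Ospace_def
proof (rule lspan_phi)
  fix h assume "h \<in> {zmon i |i. N + 1 \<le> i} \<union> {binom_gen N Q q j |j. j \<le> 0}"
  then show "finite {k. h k \<noteq> 0} \<and> phi Q q d h = 0"
  proof
    assume "h \<in> {zmon i |i. N + 1 \<le> i}"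
    then obtain i where "h = zmon i" "N + 1 \<le> i" by auto
    then show ?thesis using assms supp_zmon by (simp add: phi_zmon Bz_neg)
  next
    assume "h \<in> {binom_gen N Q q j |j. j \<le> 0}"
    then obtain j where "h = binom_gen N Q q j" "j \<le> 0" by auto
    then show ?thesis using assms phi_bg finite_subset[OF supp_bg] by auto
  qed
qed

lemma tri_zero:
  assumes supp: "\<And>k. h k \<noteq> 0 \<Longrightarrow> q + 1 \<le> k \<and> k \<le> N"
    and ph: "\<And>d. 1 \<le> d \<Longrightarrow> q + d \<le> N \<Longrightarrow> phi Q q d h = 0"
  shows "h = (\<lambda>k. 0)"
proof -
  define x where "x = - (of_rat Q :: complex)"
  have main: "\<forall>e::nat. 1 \<le> e \<and> q + int e \<le> N \<longrightarrow> h (q + int e) = 0"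
  proof (intro allI)
    fix e :: nat
    show "1 \<le> e \<and> q + int e \<le> N \<longrightarrow> h (q + int e) = 0"
    proof (induction e rule: less_induct)
      case (less e)
      show ?case
      proof
        assume e: "1 \<le> e \<and> q + int e \<le> N"
        have "phi Q q (int e) h = (\<Sum>k\<in>{q + 1..N}. h k * Bz x (q + int e - k))"
          unfolding x_def by (rule phi_superset) (use supp in auto)
        also have "\<dots> = (\<Sum>k\<in>{q + 1..N}. if k = q + int e then h k else 0)"
        proof (rule sum.cong[OF refl])
          fix k assume k: "k \<in> {q + 1..N}"
          show "h k * Bz x (q + int e - k) = (if k = q + int e then h k else 0)"
          proof (cases "k < q + int e")
            case True
            have "h (q + int (nat (k - q))) = 0"
              using less.IH[of "nat (k - q)"] k True e by auto
            then show ?thesis using k by auto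
          next
            case False
            then show ?thesis by (auto simp: Bz_neg Bz_0)
          qed
        qed
        also have "\<dots> = h (q + int e)" using e by (simp add: sum.delta')
        finally show "h (q + int e) = 0" using ph[of "int e"] e by simp
      qed
    qed
  qed
  show ?thesis
  proof
    fix k
    show "h k = 0"
    proof (rule ccontr)
      assume "h k \<noteq> 0"
      then have "q + 1 \<le> k \<and> k \<le> N" using supp by auto
      moreover have "q + int (nat (k - q)) = k" using \<open>q + 1 \<le> k \<and> k \<le> N\<close> by simp
      moreover have "1 \<le> nat (k - q) \<and> q + int (nat (k - q)) \<le> N" using \<open>q + 1 \<le> k \<and> k \<le> N\<close> by arith
      ultimately show False using main \<open>h k \<noteq> 0\<close> by metis
    qed
  qed
qed

lemma Ospace_low:
  "(\<And>k. h k \<noteq> 0 \<Longrightarrow> q + 1 - int M \<le> k \<and> k \<le> N) \<Longrightarrow>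
   (\<And>d. 1 \<le> d \<Longrightarrow> q + d \<le> N \<Longrightarrow> phi Q q d h = 0) \<Longrightarrow> h \<in> Ospace N Q q"
proof (induction M arbitrary: h)
  case 0
  have "h = (\<lambda>k. 0)" by (rule tri_zero[of h q N Q]) (use 0 in auto)
  then show ?case unfolding Ospace_def using lspan_zero by simp
next
  case (Suc M)
  note a = Suc.prems
  show ?case
  proof -
    define bg where "bg = binom_gen N Q q (- int M)"
    define c where "c = h (q - int M)"
    define h' where "h' = (\<lambda>k. 1 * h k + (- c) * bg k)"
    have finh: "finite {k. h k \<noteq> 0}"
      by (rule finite_subset[of _ "{q + 1 - int (Suc M)..N}"]) (use a in auto)
    have finbg: "finite {k. bg k \<noteq> 0}"
      unfolding bg_def by (rule finite_subset[OF supp_bg]) auto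
    show "h \<in> Ospace N Q q"
    proof (cases "q - int M \<le> N")
      case False
      then have "h = (\<lambda>k. 0)" using a(1) by fastforce
      then show ?thesis unfolding Ospace_def using lspan_zero by simp
    next
      case True
      have bgq: "bg (q - int M) = 1" using True by (simp add: bg_def binom_gen_def)
      have sb: "\<And>k. bg k \<noteq> 0 \<Longrightarrow> q - int M \<le> k \<and> k \<le> N"
        using supp_bg[of N Q q "- int M"] unfolding bg_def by auto
      have "h' \<in> Ospace N Q q"
      proof (rule Suc.IH)
        fix k assume "h' k \<noteq> 0"
        then have "h k \<noteq> 0 \<or> bg k \<noteq> 0" unfolding h'_def by auto
        moreover have "k \<noteq> q - int M" using \<open>h' k \<noteq> 0\<close> bgq unfolding h'_def c_def by auto
        ultimately have "q - int M \<le> k \<and> k \<le> N"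
        proof (elim disjE)
          assume "h k \<noteq> 0" then show ?thesis using a(1)[of k] by auto
        next
          assume "bg k \<noteq> 0" then show ?thesis using sb by auto
        qed
        then show "q + 1 - int M \<le> k \<and> k \<le> N" using \<open>k \<noteq> q - int M\<close> by auto
      next
        fix d assume d: "1 \<le> d" "q + d \<le> N"
        have "phi Q q d h' = 1 * phi Q q d h + (- c) * phi Q q d bg"
          unfolding h'_def by (rule phi_lin[OF finh finbg])
        also have "\<dots> = 0" using a d phi_bg[of "- int M" d q N Q] unfolding bg_def by simp
        finally show "phi Q q d h' = 0" .
      qed
      moreover have "bg \<in> Ospace N Q q" unfolding Ospace_def bg_def by (rule lspan_gen) auto
      ultimately have "(\<lambda>k. h' k + c * bg k) \<in> Ospace N Q q"
        unfolding Ospace_def by (intro lspan_add lspan_scale)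
      moreover have "(\<lambda>k. h' k + c * bg k) = h" unfolding h'_def by auto
      ultimately show ?thesis by simp
    qed
  qed
qed

lemma Ospace_back:
  assumes fin: "finite {k. g k \<noteq> 0}"
    and ph: "\<And>d. 1 \<le> d \<Longrightarrow> q + d \<le> N \<Longrightarrow> phi Q q d g = 0"
  shows "g \<in> Ospace N Q q"
proof -
  define A where "A = {x. g x \<noteq> 0 \<and> N + 1 \<le> x}"
  have finA: "finite A" using fin unfolding A_def by (rule finite_subset[rotated]) auto
  define gh where "gh = (\<lambda>k. \<Sum>x\<in>A. g x * zmon x k)"
  have gh_eq: "gh k = (if k \<in> A then g k else 0)" for k
    unfolding gh_def zmon_def using finA by (simp add: sum.delta' if_distrib cong: if_cong)
  have ghO: "gh \<in> Ospace N Q q"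
    unfolding gh_def Ospace_def
    by (rule lspan_sum[OF finA], rule lspan_scale, rule lspan_gen) (auto simp: A_def)
  have finh: "finite {k. gh k \<noteq> 0}" using finA by (rule finite_subset[rotated]) (auto simp: gh_eq split: if_splits)
  define gl where "gl = (\<lambda>k. 1 * g k + (-1) * gh k)"
  have finl: "finite {k. gl k \<noteq> 0}"
    by (rule finite_subset[of _ "{k. g k \<noteq> 0} \<union> {k. gh k \<noteq> 0}"]) (use fin finh in \<open>auto simp: gl_def\<close>)
  define L where "L = Min (insert 0 {k. gl k \<noteq> 0})"
  have L: "L \<le> k" if "gl k \<noteq> 0" for k
    unfolding L_def by (rule Min_le) (use finl that in auto)
  define M where "M = nat (q + 1 - L)"
  have "gl \<in> Ospace N Q q"
  proof (rule Ospace_low)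
    fix k assume k: "gl k \<noteq> 0"
    have "k \<le> N" using k unfolding gl_def gh_eq A_def by (auto split: if_splits)
    then show "q + 1 - int M \<le> k \<and> k \<le> N" using L[OF k] unfolding M_def by auto
  next
    fix d assume d: "1 \<le> d" "q + d \<le> N"
    have "phi Q q d gl = 1 * phi Q q d g + (-1) * phi Q q d gh"
      unfolding gl_def by (rule phi_lin[OF fin finh])
    also have "\<dots> = 0" using ph d Ospace_fwd[OF ghO, of d] by simp
    finally show "phi Q q d gl = 0" .
  qed
  then have "(\<lambda>k. gl k + gh k) \<in> Ospace N Q q" using ghO unfolding Ospace_def by (rule lspan_add)
  moreover have "(\<lambda>k. gl k + gh k) = g" unfolding gl_def by auto
  ultimately show ?thesis by simp
qed



lemma nat_gch_big: "m < t \<Longrightarrow> (of_nat m :: complex) gchoose t = 0"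
  by (metis binomial_eq_0 binomial_gbinomial of_nat_0)

lemma nat_gch_self: "(of_nat k :: complex) gchoose k = 1"
  by (metis binomial_gbinomial binomial_n_n of_nat_1)

lemma gch_shift:
  "(x + of_nat m) gchoose j = (\<Sum>t\<in>{0..m}. (of_nat m gchoose t) * Bz x (int j - int t))"
proof -
  define F where "F t = (of_nat m gchoose t) * Bz x (int j - int t)" for t
  have "(x + of_nat m) gchoose j = (\<Sum>t\<in>{0..j}. (of_nat m gchoose t) * (x gchoose (j - t)))"
    using gbinomial_Vandermonde[of "of_nat m" x j] by (simp add: add.commute)
  also have "\<dots> = (\<Sum>t\<in>{0..j}. F t)"
  proof (rule sum.cong[OF refl])
    fix t assume "t \<in> {0..j}"
    then have "nat (int j - int t) = j - t" "0 \<le> int j - int t" by auto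
    then show "(of_nat m gchoose t) * (x gchoose (j - t)) = F t" by (simp add: F_def Bz_def)
  qed
  also have "\<dots> = (\<Sum>t\<in>{0..m+j}. F t)"
    by (rule sum.mono_neutral_left) (auto simp: F_def Bz_def)
  also have "\<dots> = (\<Sum>t\<in>{0..m}. F t)"
    by (rule sum.mono_neutral_right) (auto simp: F_def nat_gch_big)
  finally show ?thesis unfolding F_def .
qed

lemma gch_comb_zero:
  fixes c :: "nat \<Rightarrow> complex"
  assumes finR: "finite R" and cR: "card R \<ge> n"
    and zR: "\<And>y. y \<in> R \<Longrightarrow> (\<Sum>j<n. c j * (y gchoose j)) = 0"
  shows "\<forall>j<n. c j = 0"
proof -
  define pb :: "nat \<Rightarrow> complex poly" where
    "pb j = smult (inverse (fact j)) (\<Prod>i<j. [:- of_nat i, 1:])" for j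
  have poly_pb: "poly (pb j) y = y gchoose j" for j y
    by (simp add: pb_def poly_prod gbinomial_prod_rev lessThan_atLeast0 divide_inverse mult.commute)
  have deg_pb: "degree (pb j) \<le> j" for j
  proof -
    have "degree (\<Prod>i<j. [:- of_nat i, 1::complex:]) \<le> (\<Sum>i<j. degree [:- of_nat i, 1::complex:])"
      using degree_prod_sum_le[of "{..<j}" "\<lambda>i. [:- of_nat i, 1::complex:]"] by (simp add: o_def)
    also have "\<dots> = j" by simp
    finally show ?thesis unfolding pb_def using degree_smult_le order_trans by blast
  qed
  define p where "p = (\<Sum>j<n. smult (c j) (pb j))"
  have poly_p: "poly p y = (\<Sum>j<n. c j * (y gchoose j))" for y
    by (simp add: p_def poly_sum poly_pb)
  have p0: "p = 0"
  proof (rule ccontr)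
    assume np: "p \<noteq> 0"
    then have "n > 0" unfolding p_def by (cases n) auto
    have "degree p \<le> n - 1" unfolding p_def
      by (rule degree_sum_le) (auto intro: order_trans[OF degree_smult_le] order_trans[OF deg_pb])
    moreover have "card {y. poly p y = 0} \<le> degree p" by (rule card_poly_roots_bound[OF np])
    moreover have "card R \<le> card {y. poly p y = 0}"
      by (rule card_mono[OF poly_roots_finite[OF np]]) (use zR poly_p in auto)
    ultimately show False using cR \<open>n > 0\<close> by linarith
  qed
  have zall: "(\<Sum>j<n. c j * (y gchoose j)) = 0" for y
    using poly_p[of y] p0 by simp
  show ?thesis
  proof (intro allI)
    fix k show "k < n \<longrightarrow> c k = 0"
    proof (induction k rule: less_induct)
      case (less k)
      show ?case
      proof
        assume kn: "k < n"
        have "0 = (\<Sum>j<n. c j * (of_nat k gchoose j))" using zall[of "of_nat k"] by simp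
        also have "\<dots> = (\<Sum>j<n. if j = k then c k else 0)"
        proof (rule sum.cong[OF refl])
          fix j assume j: "j \<in> {..<n}"
          show "c j * (of_nat k gchoose j) = (if j = k then c k else 0)"
            using less.IH[of j] j nat_gch_big[of k j] nat_gch_self[of k]
            by (cases "j < k") (auto simp: not_less_iff_gr_or_eq)
        qed
        also have "\<dots> = c k" using kn by simp
        finally show "c k = 0" by simp
      qed
    qed
  qed
qed

lemma kernel_lemma:
  fixes x :: "nat \<Rightarrow> complex" and T D :: nat
  assumes inj: "\<And>s s' m m'. s < T \<Longrightarrow> s' < T \<Longrightarrow> m < D \<Longrightarrow> m' < D \<Longrightarrow>
          x s + of_nat m = x s' + of_nat m' \<Longrightarrow> s = s' \<and> m = m'"
    and eqs: "\<And>s m. s < T \<Longrightarrow> m < D \<Longrightarrow> (\<Sum>j<T*D. v j * Bz (x s) (int j - int m)) = 0"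
  shows "\<forall>j<T*D. v j = 0"
proof (cases "D = 0")
  case True then show ?thesis by simp
next
  case False
  define g where "g i = x (i div D) + of_nat (i mod D)" for i
  define R where "R = g ` {..<T*D}"
  have lt: "i div D < T" "i mod D < D" if "i < T*D" for i
    using that False by (auto simp: less_mult_imp_div_less mult.commute)
  have injg: "inj_on g {..<T*D}"
  proof (rule inj_onI)
    fix i i' assume i: "i \<in> {..<T*D}" and i': "i' \<in> {..<T*D}" and e: "g i = g i'"
    have "i div D = i' div D \<and> i mod D = i' mod D"
      using inj[OF lt(1) lt(1) lt(2) lt(2)] i i' e unfolding g_def by auto
    then show "i = i'" by (metis div_mult_mod_eq)
  qed
  have cardR: "card R = T*D" unfolding R_def using card_image[OF injg] by simp
  show ?thesis
  proof (rule gch_comb_zero[of R])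
    show "finite R" unfolding R_def by simp
    show "T * D \<le> card R" using cardR by simp
  next
    fix y assume "y \<in> R"
    then obtain i where i: "i < T*D" "y = x (i div D) + of_nat (i mod D)" unfolding R_def g_def by auto
    define s where "s = i div D"
    define m where "m = i mod D"
    have sm: "s < T" "m < D" using lt[OF i(1)] unfolding s_def m_def by auto
    have "(\<Sum>j<T*D. v j * (y gchoose j)) =
          (\<Sum>j<T*D. \<Sum>t\<in>{0..m}. v j * ((of_nat m gchoose t) * Bz (x s) (int j - int t)))"
      unfolding i(2) s_def[symmetric] m_def[symmetric] gch_shift by (simp add: sum_distrib_left)
    also have "\<dots> = (\<Sum>t\<in>{0..m}. (of_nat m gchoose t) * (\<Sum>j<T*D. v j * Bz (x s) (int j - int t)))"
      by (subst sum.swap) (simp add: sum_distrib_left mult.assoc mult.left_commute)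
    also have "\<dots> = 0" using eqs sm by auto
    finally show "(\<Sum>j<T*D. v j * (y gchoose j)) = 0" .
  qed
qed



lemma exists_sol:
  fixes x :: "nat \<Rightarrow> complex" and T D :: nat and t :: "nat \<Rightarrow> nat \<Rightarrow> complex"
  assumes inj: "\<And>s s' m m'. s < T \<Longrightarrow> s' < T \<Longrightarrow> m < D \<Longrightarrow> m' < D \<Longrightarrow>
          x s + of_nat m = x s' + of_nat m' \<Longrightarrow> s = s' \<and> m = m'"
    and D0: "D > 0"
  shows "\<exists>v. \<forall>s<T. \<forall>m<D. (\<Sum>j<T*D. v j * Bz (x s) (int j - int m)) = t s m"
proof -
  define n where "n = T * D"
  define A :: "complex mat" where "A = mat n n (\<lambda>(i,j). Bz (x (i div D)) (int j - int (i mod D)))"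
  have A: "A \<in> carrier_mat n n" unfolding A_def by simp
  have lt: "i div D < T" "i mod D < D" if "i < n" for i
    using that D0 by (auto simp: n_def less_mult_imp_div_less mult.commute)
  have idx: "s * D + m < n" "(s * D + m) div D = s" "(s * D + m) mod D = m" if "s < T" "m < D" for s m
  proof -
    have "s * D + m < (s + 1) * D" using that by simp
    also have "\<dots> \<le> T * D" using that by (intro mult_right_mono) auto
    finally show "s * D + m < n" unfolding n_def .
    show "(s * D + m) div D = s" "(s * D + m) mod D = m" using that D0 by auto
  qed
  have row: "(A *\<^sub>v w) $ i = (\<Sum>j<n. w $ j * Bz (x (i div D)) (int j - int (i mod D)))"
    if "i < n" "w \<in> carrier_vec n" for i w
    using that unfolding A_def
    by (simp add: scalar_prod_def lessThan_atLeast0 mult.commute)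
  have "det A \<noteq> 0"
  proof
    assume "det A = 0"
    then obtain w where w: "w \<in> carrier_vec n" "w \<noteq> 0\<^sub>v n" "A *\<^sub>v w = 0\<^sub>v n"
      using det_0_iff_vec_prod_zero[OF A] by auto
    have "\<forall>j<T*D. w $ j = 0"
    proof (rule kernel_lemma[OF inj])
      fix s m assume sm: "s < T" "m < D"
      have "0 = (A *\<^sub>v w) $ (s * D + m)" using w(3) idx[OF sm] by simp
      also have "\<dots> = (\<Sum>j<T*D. w $ j * Bz (x s) (int j - int m))"
        using row[OF idx(1)[OF sm] w(1)] idx[OF sm] by (simp add: n_def)
      finally show "(\<Sum>j<T*D. w $ j * Bz (x s) (int j - int m)) = 0" by simp
    qed auto
    then have "w = 0\<^sub>v n" using w(1) unfolding n_def by (intro eq_vecI) auto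
    then show False using w(2) by simp
  qed
  then have "A \<in> Units (ring_mat TYPE(complex) n ())" by (rule det_non_zero_imp_unit[OF A])
  then obtain B where B: "B \<in> carrier_mat n n" "A * B = 1\<^sub>m n"
    unfolding Units_def ring_mat_def by auto
  define w where "w = vec n (\<lambda>i. t (i div D) (i mod D))"
  define v where "v = B *\<^sub>v w"
  have wc: "w \<in> carrier_vec n" unfolding w_def by simp
  have vc: "v \<in> carrier_vec n" unfolding v_def using B(1) wc by simp
  have Av: "A *\<^sub>v v = w" unfolding v_def using assoc_mult_mat_vec[OF A B(1) wc] B(2) wc by simp
  show ?thesis
  proof (intro exI allI impI)
    fix s m assume sm: "s < T" "m < D"
    have "t s m = w $ (s * D + m)" unfolding w_def using idx[OF sm] by simp
    also have "\<dots> = (A *\<^sub>v v) $ (s * D + m)" using Av by simp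
    also have "\<dots> = (\<Sum>j<T*D. v $ j * Bz (x s) (int j - int m))"
      using row[OF idx(1)[OF sm] vc] idx[OF sm] by (simp add: n_def)
    finally show "(\<Sum>j<T*D. v $ j * Bz (x s) (int j - int m)) = t s m" by simp
  qed
qed



lemma window_phi:
  fixes T :: nat and D :: nat
  assumes supp: "\<And>k. f k \<noteq> 0 \<Longrightarrow> N + 1 - int (T * D) \<le> k \<and> k \<le> N"
    and m: "m < D"
  shows "phi Q (N - int D) (int D - int m) f = (\<Sum>j<T*D. f (N - int j) * Bz (- of_rat Q) (int j - int m))"
proof -
  have "phi Q (N - int D) (int D - int m) f =
      (\<Sum>k\<in>{N + 1 - int (T*D)..N}. f k * Bz (- of_rat Q) (N - int D + (int D - int m) - k))"
    by (rule phi_superset) (use supp in auto)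
  also have "\<dots> = (\<Sum>j<T*D. f (N - int j) * Bz (- of_rat Q) (int j - int m))"
    by (subst sum_int_window) (simp add: algebra_simps)
  finally show ?thesis .
qed

lemma idem_ex1:
  fixes N Dd :: int and T :: nat and Q :: "int \<Rightarrow> rat" and g :: "int \<Rightarrow> lpoly"
  assumes T0: "T > 0" and Dd0: "Dd > 0"
    and dist: "\<And>s s'. s \<in> {0..int T - 1} \<Longrightarrow> s' \<in> {0..int T - 1} \<Longrightarrow> Q s - Q s' \<in> \<int> \<Longrightarrow> s = s'"
    and fing: "\<And>s. finite {k. g s k \<noteq> 0}"
  shows "\<exists>!f. (\<forall>k. f k \<noteq> 0 \<longrightarrow> N + 1 - int T * Dd \<le> k \<and> k \<le> N) \<and>
     (\<forall>s\<in>{0..int T - 1}. (\<lambda>k. f k - g s k) \<in> Ospace N (Q s) (N - Dd))"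
proof -
  define D where "D = nat Dd"
  have DD: "Dd = int D" "D > 0" using Dd0 unfolding D_def by auto
  define x where "x s = - (of_rat (Q (int s)) :: complex)" for s :: nat
  have inj: "s = s' \<and> m = m'"
    if "s < T" "s' < T" "m < D" "m' < D" "x s + of_nat m = x s' + of_nat m'" for s s' m m'
  proof -
    have "(of_rat (Q (int s') - Q (int s)) :: complex) = of_rat (of_int (int m' - int m))"
      using that(5) unfolding x_def by (simp add: of_rat_diff algebra_simps)
    then have "Q (int s') - Q (int s) = of_int (int m' - int m)" by (simp only: of_rat_eq_iff)
    then have "Q (int s') - Q (int s) \<in> \<int>" by simp
    then have "int s' = int s" using dist[of "int s'" "int s"] that by auto
    then show ?thesis using that(5) by simp
  qed
  have TD: "int T * Dd = int (T * D)" using DD by simp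
  let ?P = "\<lambda>f. (\<forall>k. f k \<noteq> 0 \<longrightarrow> N + 1 - int T * Dd \<le> k \<and> k \<le> N) \<and>
     (\<forall>s\<in>{0..int T - 1}. (\<lambda>k. f k - g s k) \<in> Ospace N (Q s) (N - Dd))"
  have key: "phi (Q (int s)) (N - int D) (int D - int m) f = phi (Q (int s)) (N - int D) (int D - int m) (g (int s))"
    if Pf: "?P f" and sm: "s < T" "m < D" for f s m
  proof -
    have finf: "finite {k. f k \<noteq> 0}"
      by (rule finite_subset[of _ "{N + 1 - int T * Dd..N}"]) (use Pf in auto)
    have "(\<lambda>k. f k - g (int s) k) \<in> Ospace N (Q (int s)) (N - int D)"
      using Pf sm DD by auto
    then have "phi (Q (int s)) (N - int D) (int D - int m) (\<lambda>k. f k - g (int s) k) = 0"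
      using Ospace_fwd[of _ N "Q (int s)" "N - int D" "int D - int m"] sm by auto
    then show ?thesis using phi_diff[OF finf fing] by simp
  qed
  have repr: "phi (Q (int s)) (N - int D) (int D - int m) f =
      (\<Sum>j<T*D. f (N - int j) * Bz (x s) (int j - int m))"
    if Pf: "\<forall>k. f k \<noteq> 0 \<longrightarrow> N + 1 - int T * Dd \<le> k \<and> k \<le> N" and sm: "m < D" for f s m
    unfolding x_def by (rule window_phi) (use Pf sm TD in auto)
  show ?thesis
  proof (rule ex_ex1I)
    define t where "t s m = phi (Q (int s)) (N - int D) (int D - int m) (g (int s))" for s m
    obtain v where v: "\<And>s m. s < T \<Longrightarrow> m < D \<Longrightarrow> (\<Sum>j<T*D. v j * Bz (x s) (int j - int m)) = t s m"
      using exists_sol[of T D x t] inj DD by blast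
    define f where "f k = (if N + 1 - int T * Dd \<le> k \<and> k \<le> N then v (nat (N - k)) else 0)" for k
    have fsupp: "\<forall>k. f k \<noteq> 0 \<longrightarrow> N + 1 - int T * Dd \<le> k \<and> k \<le> N" unfolding f_def by auto
    have fv: "f (N - int j) = v j" if "j < T * D" for j
    proof -
      have "int j < int T * int D" using that by (simp flip: of_nat_mult)
      then show ?thesis unfolding f_def DD(1) by auto
    qed
    have finf: "finite {k. f k \<noteq> 0}"
      by (rule finite_subset[of _ "{N + 1 - int T * Dd..N}"]) (use fsupp in auto)
    show "\<exists>f. ?P f"
    proof (intro exI conjI ballI)
      show "\<forall>k. f k \<noteq> 0 \<longrightarrow> N + 1 - int T * Dd \<le> k \<and> k \<le> N" by (rule fsupp)
    next
      fix s assume s: "s \<in> {0..int T - 1}"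
      define sn where "sn = nat s"
      have sn: "s = int sn" "sn < T" using s unfolding sn_def by auto
      show "(\<lambda>k. f k - g s k) \<in> Ospace N (Q s) (N - Dd)"
      proof (rule Ospace_back)
        show "finite {k. f k - g s k \<noteq> 0}"
          by (rule finite_subset[of _ "{k. f k \<noteq> 0} \<union> {k. g s k \<noteq> 0}"]) (use finf fing in auto)
      next
        fix d assume d: "1 \<le> d" "N - Dd + d \<le> N"
        define m where "m = nat (Dd - d)"
        have m: "m < D" "d = int D - int m" using d DD unfolding m_def by auto
        have "phi (Q s) (N - Dd) d (\<lambda>k. f k - g s k) = phi (Q s) (N - Dd) d f - phi (Q s) (N - Dd) d (g s)"
          by (rule phi_diff[OF finf fing])
        also have "phi (Q s) (N - Dd) d f = (\<Sum>j<T*D. f (N - int j) * Bz (x sn) (int j - int m))"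
          unfolding sn(1) m(2) DD(1) by (rule repr) (use fsupp m in auto)
        also have "\<dots> = (\<Sum>j<T*D. v j * Bz (x sn) (int j - int m))"
          by (rule sum.cong) (auto simp: fv)
        also have "\<dots> = t sn m" using v sn m by simp
        also have "t sn m = phi (Q s) (N - Dd) d (g s)" unfolding t_def sn(1) m(2) DD(1) ..
        finally show "phi (Q s) (N - Dd) d (\<lambda>k. f k - g s k) = 0" by simp
      qed
    qed
  next
    fix f1 f2 assume P1: "?P f1" and P2: "?P f2"
    have z: "\<forall>j<T*D. f1 (N - int j) - f2 (N - int j) = 0"
    proof (rule kernel_lemma[OF inj])
      fix s m assume sm: "s < T" "m < D"
      have "(\<Sum>j<T*D. (f1 (N - int j) - f2 (N - int j)) * Bz (x s) (int j - int m)) =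
          (\<Sum>j<T*D. f1 (N - int j) * Bz (x s) (int j - int m)) - (\<Sum>j<T*D. f2 (N - int j) * Bz (x s) (int j - int m))"
        by (simp add: sum_subtractf left_diff_distrib)
      also have "\<dots> = 0"
        using repr[OF conjunct1[OF P1] sm(2), of s] repr[OF conjunct1[OF P2] sm(2), of s] key[OF P1 sm] key[OF P2 sm] by simp
      finally show "(\<Sum>j<T*D. (f1 (N - int j) - f2 (N - int j)) * Bz (x s) (int j - int m)) = 0" .
    qed auto
    show "f1 = f2"
    proof
      fix k
      show "f1 k = f2 k"
      proof (cases "N + 1 - int T * Dd \<le> k \<and> k \<le> N")
        case True
        define j where "j = nat (N - k)"
        have "N - k < int T * int D" using True DD by auto
        then have "int j < int (T * D)" using True unfolding j_def by simp
        then have "j < T * D" by (simp only: of_nat_less_iff)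
        moreover have "k = N - int j" using True unfolding j_def by auto
        ultimately show ?thesis using z by auto
      next
        case False
        then have "f1 k = 0" "f2 k = 0" using P1 P2 by blast+
        then show ?thesis by simp
      qed
    qed
  qed
qed



lemma dist_Q:
  fixes T :: nat and c :: "int \<Rightarrow> int"
  assumes T0: "T > 0"
    and s: "s \<in> {0..int T - 1}" and s': "s' \<in> {0..int T - 1}"
    and z: "(of_int (c s) + of_int s / of_nat T) - (of_int (c s') + of_int s' / of_nat T) \<in> (\<int> :: rat set)"
  shows "s = s'"
proof -
  have "of_int (s - s') / (of_nat T :: rat) \<in> \<int>"
  proof -
    have "of_int (s - s') / (of_nat T :: rat) =
        ((of_int (c s) + of_int s / of_nat T) - (of_int (c s') + of_int s' / of_nat T)) - of_int (c s - c s')"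
      using T0 by (simp add: field_simps)
    also have "\<dots> \<in> \<int>" by (rule Ints_diff[OF z]) simp
    finally show ?thesis .
  qed
  then obtain z where "of_int (s - s') / (of_nat T :: rat) = of_int z" by (auto elim: Ints_cases)
  then have "(of_int (s - s') :: rat) = of_int (z * int T)" using T0 by (simp add: field_simps)
  then have e: "s - s' = z * int T" by (simp only: of_int_eq_iff)
  have "\<bar>s - s'\<bar> < int T" using s s' by auto
  then have "\<bar>z\<bar> * int T < 1 * int T" using e by (simp add: abs_mult)
  then have "\<bar>z\<bar> < 1" using T0 by (simp only: mult_less_cancel_right)
  then have "z = 0" by auto
  then show ?thesis using e by simp
qed

lemma idem_props:
  fixes T :: nat and m n :: rat
  assumes T0: "T > 0" and l1: "lpart m \<ge> 0" and l3: "lpart n \<ge> 0" and i1: "0 \<le> ipart T m"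
    and Nge: "\<Delta> \<le> \<beta>"
  shows "idem T n m \<Delta> 0 \<beta> r j (-1) = (if r = 0 \<and> j = -1 then 1 else 0)"
    and "finite {k. idem T n m \<Delta> 0 \<beta> r j k \<noteq> 0}"
proof -
  define L1 where "L1 = lpart m"
  define I1 where "I1 = ipart T m"
  define L3 where "L3 = lpart n"
  define N where "N = \<beta> - 1 - \<Delta>"
  define D where "D = N + L1 + L3 + 3"
  define Q where "Q s = (of_int (0 - 1 + L1 + dlt (s \<le> I1)) + of_int s / of_nat T :: rat)" for s
  define P where "P f \<longleftrightarrow> (\<forall>k. f k \<noteq> 0 \<longrightarrow> N + 1 - int T * D \<le> k \<and> k \<le> N) \<and>
     (\<forall>s\<in>{0..int T - 1}. (\<lambda>k. f k - (if r = s then zmon j k else 0)) \<in> Ospace N (Q s) (- L1 - L3 - 3))" for f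
  have idem_eq: "idem T n m \<Delta> 0 \<beta> r j = (if j \<ge> N + 1 \<or> D \<le> 0 then (\<lambda>k. 0) else (THE f. P f))"
    unfolding idem_def Let_def N_def D_def L1_def L3_def I1_def P_def Q_def by simp
  have Dpos: "D > 0" using l1 l3 Nge unfolding D_def N_def L1_def L3_def by simp
  have qeq: "- L1 - L3 - 3 = N - D" unfolding D_def by simp
  have ex: "\<exists>!f. P f"
  proof -
    have "\<exists>!f. (\<forall>k. f k \<noteq> 0 \<longrightarrow> N + 1 - int T * D \<le> k \<and> k \<le> N) \<and>
     (\<forall>s\<in>{0..int T - 1}. (\<lambda>k. f k - (\<lambda>s k. if r = s then zmon j k else 0) s k) \<in> Ospace N (Q s) (N - D))"
    proof (rule idem_ex1[OF T0 Dpos])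
      fix s s' assume "s \<in> {0..int T - 1}" "s' \<in> {0..int T - 1}" "Q s - Q s' \<in> \<int>"
      then show "s = s'" unfolding Q_def by (rule dist_Q[OF T0])
    next
      fix s show "finite {k. (if r = s then zmon j k else 0) \<noteq> 0}"
        using supp_zmon[of j] by (rule finite_subset[rotated]) auto
    qed
    then show ?thesis unfolding P_def qeq by simp
  qed
  have PT: "P (THE f. P f)" using theI'[OF ex] .
  have PTs: "\<forall>k. (THE f. P f) k \<noteq> 0 \<longrightarrow> N + 1 - int T * D \<le> k \<and> k \<le> N"
    using PT unfolding P_def by (rule conjunct1)
  have PT2: "\<forall>s\<in>{0..int T - 1}. (\<lambda>k. (THE f. P f) k - (if r = s then zmon j k else 0)) \<in> Ospace N (Q s) (- L1 - L3 - 3)"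
    using PT unfolding P_def by (rule conjunct2)
  show "finite {k. idem T n m \<Delta> 0 \<beta> r j k \<noteq> 0}"
  proof (cases "j \<ge> N + 1 \<or> D \<le> 0")
    case True then show ?thesis using idem_eq by simp
  next
    case False
    then have "idem T n m \<Delta> 0 \<beta> r j = (THE f. P f)" using idem_eq by simp
    moreover have "finite {k. (THE f. P f) k \<noteq> 0}"
      by (rule finite_subset[of _ "{N + 1 - int T * D..N}"]) (use PTs in auto)
    ultimately show ?thesis by simp
  qed
  show "idem T n m \<Delta> 0 \<beta> r j (-1) = (if r = 0 \<and> j = -1 then 1 else 0)"
  proof (cases "j \<ge> N + 1")
    case True
    then show ?thesis using idem_eq Nge unfolding N_def by auto
  next
    case False
    define f where "f = (THE f. P f)"
    have fe: "idem T n m \<Delta> 0 \<beta> r j = f" using idem_eq False Dpos unfolding f_def by simp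
    have "(\<lambda>k. f k - (if r = 0 then zmon j k else 0)) \<in> Ospace N (Q 0) (- L1 - L3 - 3)"
      unfolding f_def by (rule bspec[OF PT2]) (use T0 in simp)
    moreover have "Q 0 = of_int L1" unfolding Q_def using i1 unfolding I1_def by (simp add: dlt_def)
    ultimately have mem: "(\<lambda>k. f k - (if r = 0 then zmon j k else 0)) \<in> Ospace N (of_int L1) (- L1 - L3 - 3)"
      by simp
    have "(\<lambda>k. f k - (if r = 0 then zmon j k else 0)) (-1) = 0"
      using mem unfolding Ospace_def
    proof (rule lspan_eval)
      fix h assume "h \<in> {zmon i |i. N + 1 \<le> i} \<union> {binom_gen N (of_int L1) (- L1 - L3 - 3) j |j. j \<le> 0}"
      then show "h (-1) = 0"
      proof
        assume "h \<in> {zmon i |i. N + 1 \<le> i}"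
        then obtain i where "h = zmon i" "N + 1 \<le> i" by auto
        then show ?thesis using Nge unfolding N_def zmon_def by auto
      next
        assume "h \<in> {binom_gen N (of_int L1) (- L1 - L3 - 3) j |j. j \<le> 0}"
        then obtain j' where h: "h = binom_gen N (of_int L1) (- L1 - L3 - 3) j'" "j' \<le> 0" by auto
        have L1n: "(of_rat (of_int L1) :: complex) = of_nat (nat L1)" using l1 unfolding L1_def by simp
        have "nat L1 < nat (- 1 - (- L1 - L3 - 3) - j')" using h(2) l1 l3 unfolding L1_def L3_def by auto
        then show ?thesis unfolding h(1) binom_gen_def L1n using nat_gch_big by auto
      qed
    qed
    then show ?thesis unfolding fe by (auto simp: zmon_def)
  qed
qed



lemma lpart_nat: "T > 0 \<Longrightarrow> lpart (of_nat k / of_nat T) = int (k div T)"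
  unfolding lpart_def by (simp add: floor_divide_of_nat_eq)

lemma ipart_nat: assumes T0: "T > 0" shows "ipart T (of_nat k / of_nat T) = int (k mod T)"
proof -
  have e: "(of_nat k :: rat) = of_nat (k div T) * of_nat T + of_nat (k mod T)"
    by (metis div_mult_mod_eq of_nat_add of_nat_mult)
  have "(of_nat T :: rat) * (of_nat k / of_nat T - of_int (int (k div T))) = of_nat (k mod T)"
    using T0 by (subst e) (simp add: field_simps)
  then show ?thesis unfolding ipart_def by (simp add: floor_divide_of_nat_eq)
qed

lemma bracket_nat:
  assumes T0: "T > 0"
  shows "bracket T (of_nat c / of_nat T) (of_nat b / of_nat T) = (int c - int b) mod int T"
  unfolding bracket_def
proof (rule the_equality)
  define r0 where "r0 = (int c - int b) mod int T"
  have "int c - int b = (int c - int b) div int T * int T + r0" unfolding r0_def by simp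
  then have "(of_int (int c - int b) :: rat) = of_int ((int c - int b) div int T * int T + r0)" by simp
  then have "(of_nat c / of_nat T - of_nat b / of_nat T - of_int r0 / of_nat T :: rat) =
      of_int ((int c - int b) div int T)"
    using T0 by (simp add: field_simps)
  moreover have "0 \<le> r0" "r0 \<le> int T - 1" using T0 unfolding r0_def by auto
  ultimately show "0 \<le> (int c - int b) mod int T \<and> (int c - int b) mod int T \<le> int T - 1 \<and>
    of_nat c / of_nat T - of_nat b / of_nat T - of_int ((int c - int b) mod int T) / of_nat T \<in> (\<int> :: rat set)"
    unfolding r0_def by auto
next
  fix r assume r: "0 \<le> r \<and> r \<le> int T - 1 \<and>
    of_nat c / of_nat T - of_nat b / of_nat T - of_int r / of_nat T \<in> (\<int> :: rat set)"
  then obtain z where "of_nat c / of_nat T - of_nat b / of_nat T - of_int r / of_nat T = (of_int z :: rat)"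
    by (auto elim: Ints_cases)
  moreover have "(of_nat c - of_nat b - of_int r :: rat) =
      (of_nat c / of_nat T - of_nat b / of_nat T - of_int r / of_nat T) * of_nat T"
    using T0 by (simp add: field_simps)
  ultimately have "(of_nat c - of_nat b - of_int r :: rat) = of_int z * of_nat T" by simp
  then have "(of_int (int c - int b - r) :: rat) = of_int (z * int T)" by simp
  then have "int c - int b = z * int T + r" by (simp only: of_int_eq_iff)
  then have "(int c - int b) mod int T = r mod int T" by simp
  also have "\<dots> = r" using r by simp
  finally show "r = (int c - int b) mod int T" by simp
qed

lemma zero_if: "(X::complex) = 0 \<Longrightarrow> A * (if C then X else 0) = 0" by simp

lemma CL:
  fixes l1 l2 l3 :: nat
  defines "\<mu> \<equiv> int l2 - int l1 - int l3 - 1"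
  shows "(\<Sum>i\<in>{0..l2}. (of_int \<mu> gchoose i) *
      (if \<mu> - int i \<le> -1 then (of_nat l1 gchoose nat (-1 - \<mu> + int i)) else 0)) = (if l2 = l3 then 1 else (0::complex))"
proof (cases "l2 < l3")
  case True
  have "(\<Sum>i\<in>{0..l2}. (of_int \<mu> gchoose i) *
      (if \<mu> - int i \<le> -1 then (of_nat l1 gchoose nat (-1 - \<mu> + int i)) else 0)) = (0::complex)"
  proof (rule sum.neutral, intro ballI)
    fix i assume "i \<in> {0..l2}"
    show "(of_int \<mu> gchoose i) * (if \<mu> - int i \<le> -1 then (of_nat l1 gchoose nat (-1 - \<mu> + int i)) else 0) = (0::complex)"
      by (rule zero_if, rule nat_gch_big) (use True in \<open>auto simp: \<mu>_def\<close>)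
  qed
  then show ?thesis using True by simp
next
  case False
  define d where "d = l2 - l3"
  have dl: "d \<le> l2" "\<mu> = int d - int l1 - 1" using False unfolding d_def \<mu>_def by auto
  have "(\<Sum>i\<in>{0..l2}. (of_int \<mu> gchoose i) *
      (if \<mu> - int i \<le> -1 then (of_nat l1 gchoose nat (-1 - \<mu> + int i)) else 0)) =
      (\<Sum>i\<in>{0..l2}. if i \<le> d then (of_int \<mu> gchoose i) * (of_nat l1 gchoose (d - i)) else (0::complex))"
  proof (rule sum.cong[OF refl])
    fix i assume "i \<in> {0..l2}"
    show "(of_int \<mu> gchoose i) * (if \<mu> - int i \<le> -1 then (of_nat l1 gchoose nat (-1 - \<mu> + int i)) else 0) =
      (if i \<le> d then (of_int \<mu> gchoose i) * (of_nat l1 gchoose (d - i)) else (0::complex))"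
    proof (cases "i \<le> d")
      case idd: True
      show ?thesis
      proof (cases "d \<le> i + l1")
        case True
        have n: "nat (-1 - \<mu> + int i) = l1 - (d - i)" and dil: "d - i \<le> l1" using True idd dl by auto
        have C: "\<mu> - int i \<le> -1" using True idd dl by auto
        have sym: "(of_nat l1::complex) gchoose (l1 - (d - i)) = of_nat l1 gchoose (d - i)"
          using gbinomial_of_nat_symmetric[where 'a=complex, of "d - i" l1] dil by simp
        show ?thesis by (simp only: C idd n sym if_True)
      next
        case False
        then show ?thesis using idd dl nat_gch_big[of l1 "d - i"] by auto
      qed
    next
      case False
      have "l1 < nat (-1 - \<mu> + int i)" using False dl by auto
      then have "(of_nat l1 :: complex) gchoose nat (-1 - \<mu> + int i) = 0" by (rule nat_gch_big)
      then show ?thesis using False dl by auto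
    qed
  qed
  also have "\<dots> = (\<Sum>i\<in>{0..d}. (of_int \<mu> gchoose i) * (of_nat l1 gchoose (d - i)))"
    by (subst sum.inter_filter[symmetric]) (use dl in \<open>auto intro!: sum.cong\<close>)
  also have "\<dots> = (of_int \<mu> + of_nat l1) gchoose d" by (rule gbinomial_Vandermonde)
  also have "\<dots> = (if l2 = l3 then 1 else 0)"
  proof (cases "d = 0")
    case True then show ?thesis using False unfolding d_def by auto
  next
    case dp: False
    have "(of_int \<mu> + of_nat l1 :: complex) = of_nat (d - 1)" using dl dp by simp
    then show ?thesis using dp nat_gch_big[of "d - 1" d] False unfolding d_def by auto
  qed
  finally show ?thesis .
qed



lemma fin_supp_sum:
  assumes "finite A" "\<And>x. x \<in> A \<Longrightarrow> finite {k. F x k \<noteq> (0::complex)}"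
  shows "finite {k. (\<Sum>x\<in>A. F x k) \<noteq> 0}"
proof -
  have "{k. (\<Sum>x\<in>A. F x k) \<noteq> 0} \<subseteq> (\<Union>x\<in>A. {k. F x k \<noteq> 0})"
  proof
    fix k assume "k \<in> {k. (\<Sum>x\<in>A. F x k) \<noteq> 0}"
    then have "(\<Sum>x\<in>A. F x k) \<noteq> 0" by simp
    then obtain x where "x \<in> A" "F x k \<noteq> 0" using sum.neutral[of A "\<lambda>x. F x k"] by blast
    then show "k \<in> (\<Union>x\<in>A. {k. F x k \<noteq> 0})" by auto
  qed
  moreover have "finite (\<Union>x\<in>A. {k. F x k \<noteq> 0})" using assms by auto
  ultimately show ?thesis by (rule finite_subset)
qed

lemma fin_supp_mult: "finite {k. f k \<noteq> 0} \<Longrightarrow> finite {k. c * f k \<noteq> (0::complex)}"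
  by (rule finite_subset[rotated]) auto

lemma inner_delta:
  assumes "-1 \<le> N"
  shows "(\<Sum>j\<in>{a..N::int}. F j * (if r = (0::int) \<and> j = -1 then 1 else 0)) =
    (if r = 0 \<and> a \<le> -1 then F (-1) else (0::complex))"
proof (cases "r = 0")
  case True
  have "(\<Sum>j\<in>{a..N::int}. F j * (if r = (0::int) \<and> j = -1 then 1 else 0)) =
      (\<Sum>j\<in>{a..N::int}. if j = -1 then F j else 0)"
    using True by (intro sum.cong) auto
  also have "\<dots> = (if -1 \<in> {a..N} then F (-1) else 0)" by (simp add: sum.delta)
  finally show ?thesis using True assms by auto
next
  case False then show ?thesis by simp
qed

lemma Ppoly_props:
  fixes T a1 b c :: nat
  assumes T0: "T > 0" and Nge: "\<Delta> \<le> \<beta>"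
    and m_def: "m = of_nat a1 / of_nat T" and n_def: "n = of_nat b / of_nat T" and p_def: "p = of_nat c / of_nat T"
  shows "finite {k. Ppoly T n p m \<Delta> 0 \<beta> k \<noteq> 0}"
    and "Ppoly T n p m \<Delta> 0 \<beta> (-1) = (if n = p then 1 else 0)"
proof -
  have lm: "lpart m = int (a1 div T)" and im: "ipart T m = int (a1 mod T)"
    and ln: "lpart n = int (b div T)" and inn: "ipart T n = int (b mod T)"
    and lp: "lpart p = int (c div T)" and br: "bracket T p n = (int c - int b) mod int T"
    unfolding m_def n_def p_def using T0 lpart_nat ipart_nat bracket_nat by auto
  note IP = idem_props[OF T0 _ _ _ Nge, of m n] 
  have IP1: "idem T n m \<Delta> 0 \<beta> r j (-1) = (if r = 0 \<and> j = -1 then 1 else 0)" for r j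
    using IP(1) lm ln im by auto
  have IP2: "finite {k. idem T n m \<Delta> 0 \<beta> r j k \<noteq> 0}" for r j
    using IP(2) lm ln im by auto
  show "finite {k. Ppoly T n p m \<Delta> 0 \<beta> k \<noteq> 0}"
    unfolding Ppoly_def Let_def by (intro fin_supp_sum fin_supp_mult IP2) auto
  define r where "r = bracket T p n"
  define \<mu> where "\<mu> = lpart p - lpart m - lpart n - dlt (r \<le> ipart T m) - dlt (int T \<le> r + ipart T n)"
  define cc where "cc = of_int (0 - 1 + lpart m + dlt (r \<le> ipart T m)) + of_int r / (of_nat T :: rat)"
  define N where "N = 0 + \<beta> - 1 - \<Delta>"
  have "Ppoly T n p m \<Delta> 0 \<beta> (-1) = (\<Sum>i\<in>{0..nat (lpart p)}. (of_int \<mu> gchoose i) *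
      (\<Sum>j\<in>{\<mu> - int i..N}. (of_rat cc gchoose nat (j - \<mu> + int i)) * idem T n m \<Delta> 0 \<beta> r j (-1)))"
    unfolding Ppoly_def Let_def r_def \<mu>_def cc_def N_def by simp
  also have "\<dots> = (\<Sum>i\<in>{0..nat (lpart p)}. (of_int \<mu> gchoose i) *
      (if r = 0 \<and> \<mu> - int i \<le> -1 then (of_rat cc gchoose nat (-1 - \<mu> + int i)) else 0))"
    unfolding IP1 using Nge by (subst inner_delta) (auto simp: N_def)
  finally have P1: "Ppoly T n p m \<Delta> 0 \<beta> (-1) = \<dots>" .
  have np: "n = p \<longleftrightarrow> b = c" unfolding n_def p_def using T0 by (auto simp: divide_cancel_right)
  show "Ppoly T n p m \<Delta> 0 \<beta> (-1) = (if n = p then 1 else 0)"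
  proof (cases "r = 0")
    case False
    have "b \<noteq> c" using False unfolding r_def br by auto
    then show ?thesis unfolding P1 using False np by simp
  next
    case True
    have "int c mod int T = int b mod int T" using True unfolding r_def br by (simp add: mod_eq_dvd_iff dvd_eq_mod_eq_0)
    then have cm: "c mod T = b mod T" by (metis of_nat_eq_iff zmod_int)
    have bc: "b = c \<longleftrightarrow> c div T = b div T" using cm by (metis div_mult_mod_eq)
    have mu: "\<mu> = int (c div T) - int (a1 div T) - int (b div T) - 1"
      unfolding \<mu>_def True lm ln lp im inn using T0 by (simp add: dlt_def not_le)
    have ccv: "(of_rat cc :: complex) = of_nat (a1 div T)"
      unfolding cc_def True lm im by (simp add: dlt_def)
    have "Ppoly T n p m \<Delta> 0 \<beta> (-1) = (\<Sum>i\<in>{0..c div T}. (of_int \<mu> gchoose i) *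
      (if \<mu> - int i \<le> -1 then (of_nat (a1 div T) gchoose nat (-1 - \<mu> + int i)) else 0))"
      unfolding P1 lp ccv using True by simp
    also have "\<dots> = (if c div T = b div T then 1 else 0)" unfolding mu by (rule CL)
    finally show ?thesis using np bc by auto
  qed
qed



lemma comp_props:
  assumes "graded_vertex_algebra sc Y vac Vg \<Delta>"
  shows "finite {k. comp Vg v k \<noteq> 0} \<and> (\<forall>k. comp Vg v k \<in> Vg k) \<and> v = sum (comp Vg v) {k. comp Vg v k \<noteq> 0}"
proof -
  have ex: "\<exists>!c. finite {k. c k \<noteq> 0} \<and> (\<forall>k. c k \<in> Vg k) \<and> v = sum c {k. c k \<noteq> 0}"
    using assms unfolding graded_vertex_algebra_def by blast
  show ?thesis unfolding comp_def by (rule theI'[OF ex])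
qed

lemma comp_vac:
  assumes G: "graded_vertex_algebra sc Y vac Vg \<Delta>"
  shows "comp Vg vac = (\<lambda>k. if k = 0 then vac else 0)"
proof -
  have ex: "\<exists>!c. finite {k. c k \<noteq> 0} \<and> (\<forall>k. c k \<in> Vg k) \<and> vac = sum c {k. c k \<noteq> 0}"
    using G unfolding graded_vertex_algebra_def by blast
  have vs: "vector_space sc" using G unfolding graded_vertex_algebra_def vertex_algebra_def by blast
  then have md: "Modules.module sc" by (simp add: module_iff_vector_space)
  have sub: "Modules.module.subspace sc (Vg k)" for k using G unfolding graded_vertex_algebra_def by blast
  have z: "0 \<in> Vg k" for k using Modules.module.subspace_0[OF md sub] .
  have v0: "vac \<in> Vg 0" using G unfolding graded_vertex_algebra_def by blast
  let ?c = "\<lambda>k. if k = 0 then vac else 0"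
  have P: "finite {k. ?c k \<noteq> 0} \<and> (\<forall>k. ?c k \<in> Vg k) \<and> vac = sum ?c {k. ?c k \<noteq> 0}"
  proof (intro conjI allI)
    show "finite {k. ?c k \<noteq> 0}" by (rule finite_subset[of _ "{0}"]) auto
    fix k show "?c k \<in> Vg k" using z v0 by auto
  next
    show "vac = sum ?c {k. ?c k \<noteq> 0}"
    proof (cases "vac = 0")
      case True then show ?thesis by simp
    next
      case False
      then have "{k. ?c k \<noteq> 0} = {0}" by auto
      then show ?thesis by simp
    qed
  qed
  show ?thesis unfolding comp_def by (rule the1_equality[OF ex]) (rule P)
qed

theorem mainTheorem9:
  fixes sc :: "complex \<Rightarrow> 'v::ab_group_add \<Rightarrow> 'v"
    and Y :: "'v \<Rightarrow> int \<Rightarrow> 'v \<Rightarrow> 'v" and vac :: 'v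
    and Vg :: "int \<Rightarrow> 'v set" and \<Delta> :: int and T :: nat
    and m n p :: rat and a :: 'v
  assumes "graded_vertex_algebra sc Y vac Vg \<Delta>"
    and "T > 0"
    and "\<exists>k::nat. m = of_nat k / of_nat T"
    and "\<exists>k::nat. n = of_nat k / of_nat T"
    and "\<exists>k::nat. p = of_nat k / of_nat T"
  shows "star sc Y Vg \<Delta> T n p m vac a = (if n = p then a else 0)"
proof -
  note G = assms(1)
  obtain a1 where m_def: "m = of_nat a1 / of_nat T" using assms(3) by blast
  obtain b where n_def: "n = of_nat b / of_nat T" using assms(4) by blast
  obtain c where p_def: "p = of_nat c / of_nat T" using assms(5) by blast
  have VA: "vertex_algebra sc Y vac" using G unfolding graded_vertex_algebra_def by blast
  have vs: "vector_space sc" using VA unfolding vertex_algebra_def by blast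
  then have md: "Modules.module sc" by (simp add: module_iff_vector_space)
  have Yvac: "Y vac i x = (if i = -1 then x else 0)" for i x using VA unfolding vertex_algebra_def by blast
  have linA: "Vector_Spaces.linear sc sc (\<lambda>a. Y a i x)" for i x using VA unfolding vertex_algebra_def by blast
  have Y0: "Y 0 i x = 0" for i x
    using Modules.module_hom.zero[OF linA[of i x, unfolded module_hom_iff_linear[symmetric]]] by simp
  have sc0: "sc 0 x = 0" for x using Modules.module.scale_zero_left[OF md] .
  have sc1: "sc 1 x = x" for x using Modules.module.scale_one[OF md] .
  have scz: "sc r 0 = 0" for r using Modules.module.scale_zero_right[OF md] .
  define ca where "ca = comp Vg a"
  define Sa where "Sa = {k. ca k \<noteq> 0}"
  have CP: "finite Sa" "\<And>k. ca k \<in> Vg k" "a = sum ca Sa"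
    using comp_props[OF G, of a] unfolding ca_def Sa_def by auto
  have Sge: "\<Delta> \<le> k" if "k \<in> Sa" for k
  proof (rule ccontr)
    assume "\<not> \<Delta> \<le> k"
    then have "Vg k = {0}" using G unfolding graded_vertex_algebra_def by auto
    then show False using CP(2)[of k] that unfolding Sa_def by auto
  qed
  define P where "P k2 = Ppoly T n p m \<Delta> 0 k2" for k2
  have PP: "finite {j. P k2 j \<noteq> 0}" "P k2 (-1) = (if n = p then 1 else 0)" if "k2 \<in> Sa" for k2
    using Ppoly_props[OF assms(2) Sge[OF that] m_def n_def p_def] unfolding P_def by auto
  show ?thesis
  proof (cases "vac = 0")
    case True
    have "a = 0" using Yvac[of "-1" a] Y0[of "-1" a] True by simp
    moreover have "{k. comp Vg vac k \<noteq> 0} = {}" using comp_vac[OF G] True by simp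
    ultimately show ?thesis unfolding star_def by simp
  next
    case False
    have cv: "comp Vg vac = (\<lambda>k. if k = 0 then vac else 0)" by (rule comp_vac[OF G])
    then have sv: "{k. comp Vg vac k \<noteq> 0} = {0}" using False by auto
    have "star sc Y Vg \<Delta> T n p m vac a =
      (\<Sum>k2\<in>Sa. \<Sum>j\<in>{j. P k2 j \<noteq> 0}. sc (P k2 j) (Y vac j (ca k2)))"
      unfolding star_def sv P_def ca_def Sa_def using cv by simp
    also have "\<dots> = (\<Sum>k2\<in>Sa. if n = p then ca k2 else 0)"
    proof (rule sum.cong[OF refl])
      fix k2 assume k2: "k2 \<in> Sa"
      have "(\<Sum>j\<in>{j. P k2 j \<noteq> 0}. sc (P k2 j) (Y vac j (ca k2))) =
          (\<Sum>j\<in>{j. P k2 j \<noteq> 0}. if j = -1 then sc (P k2 j) (ca k2) else 0)"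
        by (rule sum.cong) (auto simp: Yvac scz)
      also have "\<dots> = (if -1 \<in> {j. P k2 j \<noteq> 0} then sc (P k2 (-1)) (ca k2) else 0)"
        using PP(1)[OF k2] by (simp add: sum.delta)
      also have "\<dots> = sc (P k2 (-1)) (ca k2)" using sc0 by auto
      also have "\<dots> = (if n = p then ca k2 else 0)" using PP(2)[OF k2] sc0 sc1 by simp
      finally show "(\<Sum>j\<in>{j. P k2 j \<noteq> 0}. sc (P k2 j) (Y vac j (ca k2))) = (if n = p then ca k2 else 0)" .
    qed
    also have "\<dots> = (if n = p then a else 0)" using CP(3) by simp
    finally show ?thesis .
  qed
qed


end
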